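(* Let $q$ be a prime power and let $N, T, n$ be positive integers. Let $\boldsymbol{\mathcal{X}} \subseteq (\mathbb{F}_q^{N\times T})^n$ be an $n$-shot matrix code, and let $\rho,\tau$ be nonnegative integers. If $d_{\mathrm{S}}(\langle \boldsymbol{\mathcal{X}}\rangle) > 2(2\tau+\rho)$, then $\boldsymbol{\mathcal{X}}$ is $(\rho,\tau)$-correcting.
   Context: An $n$-shot matrix code is a non-empty subset $\boldsymbol{\mathcal{X}}\subseteq(\mathbb{F}_q^{N\times T})^n$. The channel is used $n$ times: on input $(\mathbf{X}_0,\ldots,\mathbf{X}_{n-1})\in\boldsymbol{\mathcal{X}}$ the output is $(\mathbf{Y}_0,\ldots,\mathbf{Y}_{n-1})$ with $\mathbf{Y}_j=\mathbf{A}_j\mathbf{X}_j+\mathbf{Z}_j$, where $\mathbf{A}_j\in\mathbb{F}_q^{N\times N}$ and $\mathbf{Z}_j\in\mathbb{F}_q^{N\times T}$ are arbitrary subject to $\sum_{j=0}^{n-1}(N-\operatorname{rank}\mathbf{A}_j)\le\rho$ and $\sum_{j=0}^{n-1}\operatorname{rank}\mathbf{Z}_j\le\tau$. The code is called $(\rho,\tau)$-correcting if the transmitted codeword $(\mathbf{X}_0,\ldots,\mathbf{X}_{n-1})$ can be unambiguously determined from $(\mathbf{Y}_0,\ldots,\mathbf{Y}_{n-1})$ for all such choices of $(\mathbf{A}_j)$ and $(\mathbf{Z}_j)$, i.e., no two distinct codewords can produce the same output. For a matrix $\mathbf{X}$, $\langle\mathbf{X}\rangle$ denotes the row space of $\mathbf{X}$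 (a subspace of $\mathbb{F}_q^T$). For subspaces $U,V$, the subspace distance is $d_{\mathrm{S}}(U,V)=\dim(U+V)-\dim(U\cap V)$; for $n$-tuples of subspaces $\boldsymbol{U}=(U_0,\dots,U_{n-1})$, $\boldsymbol{V}=(V_0,\dots,V_{n-1})$ the extended subspace distance is $d_{\mathrm{S}}(\boldsymbol{U},\boldsymbol{V})=\sum_{j=0}^{n-1}d_{\mathrm{S}}(U_j,V_j)$. For a codeword $\boldsymbol{X}=(\mathbf{X}_0,\dots,\mathbf{X}_{n-1})$, $\langle\boldsymbol{X}\rangle=(\langle\mathbf{X}_0\rangle,\dots,\langle\mathbf{X}_{n-1}\rangle)$, and $\langle\boldsymbol{\mathcal{X}}\rangle$ is the multiset/collection $\{\langle\boldsymbol{X}\rangle:\boldsymbol{X}\in\boldsymbol{\mathcal{X}}\}$; $d_{\mathrm{S}}(\langle\boldsymbol{\mathcal{X}}\rangle)$ is the minimum of $d_{\mathrm{S}}(\langle\boldsymbol{X}\rangle,\langle\boldsymbol{X}'\rangle)$ over distinct codewords $\boldsymbol{X}\neq\boldsymbol{X}'$ in $\boldsymbol{\mathcal{X}}$. *)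

theory Defs
  imports "HOL-Analysis.Analysis"
begin

text \<open>Fq is modelled by a finite field type 'a (every finite field has prime power order q).
  Matrices in Fq^(N x T) are elements of 'a^'t^'nn (rows indexed by 'nn, columns by 't).
  The n shots are indexed by a finite type 's, so an n-tuple of matrices is a function 's => matrix.\<close>

definition row_space :: "'a::field^'t^'nn \<Rightarrow> ('a^'t) set" where
  "row_space X = vec.span (rows X)"

definition subspace_dist :: "('a::field^'t) set \<Rightarrow> ('a^'t) set \<Rightarrow> nat" where
  "subspace_dist U V = vec.dim {u + v | u v. u \<in> U \<and> v \<in> V} - vec.dim (U \<inter> V)"

definition ext_subspace_dist ::
  "('s::finite \<Rightarrow> ('a::field^'t) set) \<Rightarrow> ('s \<Rightarrow> ('a^'t) set) \<Rightarrow> nat" where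
  "ext_subspace_dist U V = (\<Sum>j\<in>UNIV. subspace_dist (U j) (V j))"

definition code_row_spaces :: "('s::finite \<Rightarrow> 'a::field^'t^'nn) \<Rightarrow> ('s \<Rightarrow> ('a^'t) set)" where
  "code_row_spaces X = (\<lambda>j. row_space (X j))"

definition admissible ::
  "nat \<Rightarrow> nat \<Rightarrow> ('s::finite \<Rightarrow> 'a::field^'nn^'nn) \<Rightarrow> ('s \<Rightarrow> 'a^'t^'nn) \<Rightarrow> bool" where
  "admissible \<rho> \<tau> A Z \<longleftrightarrow>
     (\<Sum>j\<in>UNIV. CARD('nn) - rank (A j)) \<le> \<rho> \<and> (\<Sum>j\<in>UNIV. rank (Z j)) \<le> \<tau>"

definition channel_output ::
  "('s::finite \<Rightarrow> 'a::field^'nn^'nn) \<Rightarrow> ('s \<Rightarrow> 'a^'t^'nn) \<Rightarrow> ('s \<Rightarrow> 'a^'t^'nn) \<Rightarrow> ('s \<Rightarrow> 'a^'t^'nn)" where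
  "channel_output A Z X = (\<lambda>j. A j ** X j + Z j)"

definition correcting ::
  "nat \<Rightarrow> nat \<Rightarrow> ('s::finite \<Rightarrow> 'a::field^'t^'nn) set \<Rightarrow> bool" where
  "correcting \<rho> \<tau> C \<longleftrightarrow>
     (\<forall>X\<in>C. \<forall>X'\<in>C. \<forall>(A::'s \<Rightarrow> 'a^'nn^'nn) Z A' Z'.
        admissible \<rho> \<tau> A Z \<and> admissible \<rho> \<tau> A' Z' \<and>
        channel_output A Z X = channel_output A' Z' X' \<longrightarrow> X = X')"

end

theory Submission
  imports Defs
begin

lemma dim_Un_card:
  fixes S :: "('a::field^'n) set"
  assumes "finite F" shows "vec.dim (S \<union> F) \<le> vec.dim S + card F"
  using assms
proof (induction F rule: finite_induct)
  case empty then show ?case by simp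
next
  case (insert x F)
  have "vec.dim (S \<union> insert x F) = vec.dim (insert x (S \<union> F))" by simp
  also have "\<dots> \<le> vec.dim (S \<union> F) + 1" by (simp add: vec.dim_insert)
  finally show ?case using insert by simp
qed

lemma dim_Un_le:
  fixes S :: "('a::field^'n) set"
  shows "vec.dim (S \<union> T) \<le> vec.dim S + vec.dim T"
proof -
  obtain B where B: "B \<subseteq> T" "vec.independent B" "T \<subseteq> vec.span B" "card B = vec.dim T"
    using vec.basis_exists by blast
  have fB: "finite B" using B(2) vec.finiteI_independent by blast
  have "S \<union> T \<subseteq> vec.span (S \<union> B)"
    using B(3) vec.span_mono[of B "S \<union> B"] vec.span_superset[of "S \<union> B"] by blast
  then have "vec.dim (S \<union> T) \<le> vec.dim (S \<union> B)" by (rule vec.dim_mono)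
  also have "\<dots> \<le> vec.dim S + card B" by (rule dim_Un_card[OF fB])
  finally show ?thesis using B(4) by simp
qed

lemma feq: "(\<lambda>v. v v* X) = (*v) (transpose (X::'a::field^'t^'n))"
  by (rule ext) simp

lemma span_image_vm: "vec.span ((\<lambda>v. v v* X) ` S) = (\<lambda>v. v v* (X::'a::field^'t^'n)) ` vec.span S"
  unfolding feq by (rule vec.span_image)

lemma image_bound:
  fixes X :: "'a::field^'t^'n" and R :: "('a^'n) set"
  assumes "vec.subspace R"
  shows "vec.dim ((\<lambda>v. v v* X) ` UNIV) \<le> vec.dim ((\<lambda>v. v v* X) ` R) + (CARD('n) - vec.dim R)"
proof -
  let ?f = "\<lambda>v. v v* X"
  obtain B where B: "B \<subseteq> R" "vec.independent B" "R \<subseteq> vec.span B" "card B = vec.dim R"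
    using vec.basis_exists by blast
  obtain C where C: "B \<subseteq> C" "vec.independent C" "UNIV \<subseteq> vec.span C"
    using vec.maximal_independent_subset_extend[OF subset_UNIV B(2)] by metis
  have fC: "finite C" using C(2) vec.finiteI_independent by blast
  have cC: "card C = CARD('n)"
  proof -
    have sC: "vec.span C = UNIV" using C(3) by blast
    have "vec.dim C = card C" by (rule vec.dim_eq_card_independent[OF C(2)])
    moreover have "vec.dim C = vec.dim (vec.span C)" by (rule vec.dim_span[symmetric])
    ultimately have "vec.dim (UNIV::('a^'n) set) = card C" using sC by simp
    then show ?thesis by (simp add: vec_dim_card card_cart_basis)
  qed
  have "?f ` UNIV \<subseteq> ?f ` vec.span C" using C(3) by blast
  also have "\<dots> = vec.span (?f ` C)" by (simp only: span_image_vm)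
  also have "?f ` C = ?f ` B \<union> ?f ` (C - B)" using C(1) by blast
  finally have "?f ` UNIV \<subseteq> vec.span (?f ` B \<union> ?f ` (C - B))" .
  then have "vec.dim (?f ` UNIV) \<le> vec.dim (?f ` B \<union> ?f ` (C - B))" by (rule vec.dim_mono)
  also have "\<dots> \<le> vec.dim (?f ` B) + card (?f ` (C - B))"
    by (rule dim_Un_card) (use fC in auto)
  also have "\<dots> \<le> vec.dim (?f ` R) + card (C - B)"
  proof -
    have "vec.dim (?f ` B) \<le> vec.dim (?f ` R)" using B(1) by (intro vec.dim_subset) blast
    moreover have "card (?f ` (C - B)) \<le> card (C - B)" using fC by (intro card_image_le) simp
    ultimately show ?thesis by linarith
  qed
  also have "card (C - B) = CARD('n) - vec.dim R"
    using card_Diff_subset[of B C] C(1) fC B(4) cC finite_subset[OF C(1) fC] by simp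
  finally show ?thesis .
qed

lemma rows_eq: "rows M = range (\<lambda>i. M $ i)"
  by (auto simp: rows_def row_def vec_lambda_eta)


lemma row_mult: "(A ** X) $ i = (A $ i) v* X"
  by (simp add: vec_eq_iff matrix_matrix_mult_def vector_matrix_mult_def mult.commute)

lemma row_axis: "axis i 1 v* X = (X :: 'a::field^'t^'n) $ i"
proof -
  have "(\<Sum>k\<in>UNIV. (if k = i then 1 else 0) * X$k$j) = X$i$j" for j
  proof -
    have "(\<Sum>k\<in>UNIV. (if k = i then 1 else 0) * X$k$j) = (\<Sum>k\<in>UNIV. if k = i then X$k$j else 0)"
      by (rule sum.cong) auto
    then show ?thesis by simp
  qed
  then show ?thesis by (simp add: vec_eq_iff vector_matrix_mult_def axis_def)
qed

lemma span_rows_X: "vec.span (rows (X::'a::field^'t^'n)) = range (\<lambda>v. v v* X)"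
proof -
  have "rows X = (\<lambda>i. axis i 1 v* X) ` UNIV" by (simp add: rows_eq row_axis)
  also have "\<dots> = (\<lambda>v. v v* X) ` cart_basis" unfolding cart_basis_def by blast
  finally have "rows X = (\<lambda>v. v v* X) ` cart_basis" .
  then have "vec.span (rows X) = (\<lambda>v. v v* X) ` vec.span cart_basis"
    by (simp only: span_image_vm)
  then show ?thesis by simp
qed

lemma span_rows_AX: "vec.span (rows (A ** (X::'a::field^'t^'n))) = (\<lambda>v. v v* X) ` vec.span (rows A)"
proof -
  have "rows (A ** X) = (\<lambda>v. v v* X) ` rows A"
    by (auto simp: rows_eq row_mult image_iff)
  then show ?thesis by (simp only: span_image_vm)
qed

lemma rows_sub_span:
  fixes X X' :: "'a::field^'t^'n" and A A' :: "'a^'n^'n" and Z Z' :: "'a^'t^'n"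
  assumes eq: "A ** X + Z = A' ** X' + Z'"
  shows "rows (A ** X) \<subseteq> vec.span (rows (A' ** X') \<union> (rows Z \<union> rows Z'))"
proof
  fix r assume "r \<in> rows (A ** X)"
  then obtain i where ri: "r = (A ** X) $ i" by (auto simp: rows_eq)
  have "(A ** X + Z) $ i = (A' ** X' + Z') $ i" using eq by simp
  then have "r = (A' ** X') $ i + Z' $ i - Z $ i" using ri by (simp add: algebra_simps)
  moreover have "(A' ** X') $ i \<in> vec.span (rows (A' ** X') \<union> (rows Z \<union> rows Z'))"
    by (rule vec.span_base) (auto simp: rows_eq)
  moreover have "Z' $ i \<in> vec.span (rows (A' ** X') \<union> (rows Z \<union> rows Z'))"
    by (rule vec.span_base) (auto simp: rows_eq)
  moreover have "Z $ i \<in> vec.span (rows (A' ** X') \<union> (rows Z \<union> rows Z'))"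
    by (rule vec.span_base) (auto simp: rows_eq)
  ultimately show "r \<in> vec.span (rows (A' ** X') \<union> (rows Z \<union> rows Z'))"
    by (simp add: vec.span_add vec.span_diff)
qed

lemma sum_span: assumes "vec.subspace U" "vec.subspace V" shows
   "{u + v | u v. u \<in> U \<and> v \<in> V} = vec.span (U \<union> (V::('a::field^'n) set))"
proof -
  from assms have eqs: "vec.span U = U" "vec.span V = V" using vec.span_eq_iff by blast+
  show ?thesis by (simp only: vec.span_Un eqs)
qed

lemma shot_arith: "a + b = u + v \<Longrightarrow> a1 + b1 = u1 + v \<Longrightarrow> a2 + b2 = u1 + v1 \<Longrightarrow>
  b1 \<le> b \<Longrightarrow> b2 \<le> b1 \<Longrightarrow> a2 \<le> v1 + z \<Longrightarrow> a2 \<le> u1 + z \<Longrightarrow>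
  u \<le> u1 + r \<Longrightarrow> v \<le> v1 + r' \<Longrightarrow> (a::nat) - b \<le> r + r' + 2*z"
  by linarith

lemma shot:
  fixes X X' :: "'a::field^'t^'n" and A A' :: "'a^'n^'n" and Z Z' :: "'a^'t^'n"
  assumes eq: "A ** X + Z = A' ** X' + Z'"
  shows "subspace_dist (row_space X) (row_space X')
     \<le> (CARD('n) - rank A) + (CARD('n) - rank A') + 2 * (rank Z + rank Z')"
proof -
  define U where "U = row_space X"
  define V where "V = row_space X'"
  define U1 where "U1 = vec.span (rows (A ** X))"
  define V1 where "V1 = vec.span (rows (A' ** X'))"
  have sU: "vec.subspace U" "vec.subspace V" "vec.subspace U1" "vec.subspace V1"
    by (simp_all add: U_def V_def U1_def V1_def row_space_def vec.subspace_span)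
  have e1U: "U = range (\<lambda>v. v v* X)" unfolding U_def row_space_def by (rule span_rows_X)
  have e2U: "U1 = (\<lambda>v. v v* X) ` vec.span (rows A)" unfolding U1_def by (rule span_rows_AX)
  have dU: "vec.dim U \<le> vec.dim U1 + (CARD('n) - rank A)"
  proof -
    note e1 = e1U and e2 = e2U
    have e3: "vec.dim (vec.span (rows A)) = rank A" by (simp add: row_rank_def_gen vec.dim_span)
    show ?thesis unfolding e1 e2 e3[symmetric] by (rule image_bound[OF vec.subspace_span])
  qed
  have e1V: "V = range (\<lambda>v. v v* X')" unfolding V_def row_space_def by (rule span_rows_X)
  have e2V: "V1 = (\<lambda>v. v v* X') ` vec.span (rows A')" unfolding V1_def by (rule span_rows_AX)
  have dV: "vec.dim V \<le> vec.dim V1 + (CARD('n) - rank A')"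
  proof -
    note e1 = e1V and e2 = e2V
    have e3: "vec.dim (vec.span (rows A')) = rank A'" by (simp add: row_rank_def_gen vec.dim_span)
    show ?thesis unfolding e1 e2 e3[symmetric] by (rule image_bound[OF vec.subspace_span])
  qed
  have U1U: "U1 \<subseteq> U" unfolding e1U e2U by blast
  have V1V: "V1 \<subseteq> V" unfolding e1V e2V by blast
  have m1: "vec.dim {u + v | u v. u \<in> U \<and> v \<in> V} + vec.dim (U \<inter> V) = vec.dim U + vec.dim V"
    using sU by (intro vec.dim_sums_Int)
  have m2: "vec.dim {u + v | u v. u \<in> U1 \<and> v \<in> V} + vec.dim (U1 \<inter> V) = vec.dim U1 + vec.dim V"
    using sU by (intro vec.dim_sums_Int)
  have m3: "vec.dim {u + v | u v. u \<in> U1 \<and> v \<in> V1} + vec.dim (U1 \<inter> V1) = vec.dim U1 + vec.dim V1"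
    using sU by (intro vec.dim_sums_Int)
  have i1: "vec.dim (U1 \<inter> V) \<le> vec.dim (U \<inter> V)" using U1U by (intro vec.dim_subset) blast
  have i2: "vec.dim (U1 \<inter> V1) \<le> vec.dim (U1 \<inter> V)" using V1V by (intro vec.dim_subset) blast
  have S2: "{u + v | u v. u \<in> U1 \<and> v \<in> V1} = vec.span (U1 \<union> V1)"
    by (rule sum_span[OF sU(3) sU(4)])
  have b1: "vec.dim {u + v | u v. u \<in> U1 \<and> v \<in> V1} \<le> vec.dim V1 + (rank Z + rank Z')"
  proof -
    let ?W = "rows (A' ** X') \<union> (rows Z \<union> rows Z')"
    have "rows (A ** X) \<subseteq> vec.span ?W" by (rule rows_sub_span[OF eq])
    then have "U1 \<subseteq> vec.span ?W" unfolding U1_def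
      by (metis vec.span_mono vec.span_span)
    moreover have "V1 \<subseteq> vec.span ?W" unfolding V1_def by (intro vec.span_mono) blast
    ultimately have "vec.span (U1 \<union> V1) \<subseteq> vec.span ?W"
      by (metis Un_least vec.span_mono vec.span_span)
    then have "vec.dim (vec.span (U1 \<union> V1)) \<le> vec.dim ?W" by (rule vec.dim_mono)
    also have "\<dots> \<le> vec.dim (rows (A' ** X')) + (vec.dim (rows Z) + vec.dim (rows Z'))"
      using dim_Un_le[of "rows (A' ** X')" "rows Z \<union> rows Z'"] dim_Un_le[of "rows Z" "rows Z'"]
      by linarith
    finally show ?thesis using S2 by (simp add: V1_def vec.dim_span row_rank_def_gen)
  qed
  have eq': "A' ** X' + Z' = A ** X + Z" using eq by simp
  have b2: "vec.dim {u + v | u v. u \<in> U1 \<and> v \<in> V1} \<le> vec.dim U1 + (rank Z + rank Z')"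
  proof -
    let ?W = "rows (A ** X) \<union> (rows Z' \<union> rows Z)"
    have "rows (A' ** X') \<subseteq> vec.span ?W" by (rule rows_sub_span[OF eq'])
    then have "V1 \<subseteq> vec.span ?W" unfolding V1_def
      by (metis vec.span_mono vec.span_span)
    moreover have "U1 \<subseteq> vec.span ?W" unfolding U1_def by (intro vec.span_mono) blast
    ultimately have "vec.span (U1 \<union> V1) \<subseteq> vec.span ?W"
      by (metis Un_least vec.span_mono vec.span_span)
    then have "vec.dim (vec.span (U1 \<union> V1)) \<le> vec.dim ?W" by (rule vec.dim_mono)
    also have "\<dots> \<le> vec.dim (rows (A ** X)) + (vec.dim (rows Z') + vec.dim (rows Z))"
      using dim_Un_le[of "rows (A ** X)" "rows Z' \<union> rows Z"] dim_Un_le[of "rows Z'" "rows Z"]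
      by linarith
    finally show ?thesis using S2 by (simp add: U1_def vec.dim_span row_rank_def_gen)
  qed
  show ?thesis
    unfolding subspace_dist_def U_def[symmetric] V_def[symmetric]
    by (rule shot_arith[OF m1 m2 m3 i1 i2 b1 b2 dU dV])
qed

lemma arith_helper: "(a::nat) \<le> r \<Longrightarrow> b \<le> r \<Longrightarrow> c \<le> 2*(t+t) \<Longrightarrow> a + b + c \<le> 2*(2*t + r)"
  by simp

theorem mainTheorem1:
  fixes C :: "('s::finite \<Rightarrow> 'a::{field,finite}^'t^'nn) set"
    and \<rho> \<tau> :: nat
  assumes "C \<noteq> {}"
    and "\<forall>X\<in>C. \<forall>X'\<in>C. X \<noteq> X' \<longrightarrow>
           ext_subspace_dist (code_row_spaces X) (code_row_spaces X') > 2 * (2 * \<tau> + \<rho>)"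
  shows "correcting \<rho> \<tau> C"
  unfolding correcting_def
proof (intro ballI allI impI)
  fix X X' A Z A' Z'
  assume XC: "X \<in> C" and X'C: "X' \<in> C"
    and h: "admissible \<rho> \<tau> A Z \<and> admissible \<rho> \<tau> A' Z' \<and> channel_output A Z X = channel_output A' Z' X'"
  have eqj: "A j ** X j + Z j = A' j ** X' j + Z' j" for j
    using h unfolding channel_output_def by meson
  have "ext_subspace_dist (code_row_spaces X) (code_row_spaces X')
      \<le> (\<Sum>j\<in>UNIV. (CARD('nn) - rank (A j)) + (CARD('nn) - rank (A' j)) + 2 * (rank (Z j) + rank (Z' j)))"
    unfolding ext_subspace_dist_def code_row_spaces_def
    by (intro sum_mono shot eqj)
  also have "\<dots> = (\<Sum>j\<in>UNIV. CARD('nn) - rank (A j)) + (\<Sum>j\<in>UNIV. CARD('nn) - rank (A' j))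
      + 2 * ((\<Sum>j\<in>UNIV. rank (Z j)) + (\<Sum>j\<in>UNIV. rank (Z' j)))"
    by (simp add: sum.distrib sum_distrib_left)
  also have "\<dots> \<le> 2 * (2 * \<tau> + \<rho>)"
  proof -
    have "(\<Sum>j\<in>UNIV. CARD('nn) - rank (A j)) \<le> \<rho>" "(\<Sum>j\<in>UNIV. rank (Z j)) \<le> \<tau>"
      "(\<Sum>j\<in>UNIV. CARD('nn) - rank (A' j)) \<le> \<rho>" "(\<Sum>j\<in>UNIV. rank (Z' j)) \<le> \<tau>"
      using h unfolding admissible_def by auto
    then have "2 * ((\<Sum>j\<in>UNIV. rank (Z j)) + (\<Sum>j\<in>UNIV. rank (Z' j))) \<le> 2 * (\<tau> + \<tau>)"
      by (intro mult_le_mono2 add_mono)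
    with \<open>(\<Sum>j\<in>UNIV. CARD('nn) - rank (A j)) \<le> \<rho>\<close> \<open>(\<Sum>j\<in>UNIV. CARD('nn) - rank (A' j)) \<le> \<rho>\<close>
    show ?thesis by (rule arith_helper)
  qed
  finally show "X = X'" using assms(2) XC X'C by (meson leD)
qed

end
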